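(* Let $M=(E,\mathcal{L})$ be a matroid. Then its near finitarization $M^{\mathrm{nfin}}$ is a finitary matroid if and only if $M$ is nearly finitary.
   Context: Matroids (possibly infinite): $\emptyset$ independent; subsets of independent sets independent; if $B$ is maximal independent and $A$ non-maximal independent, then $A\cup\{b\}$ is independent for some $b\in B\setminus A$; for independent $A\subseteq X\subseteq E$ there is a maximal independent $S$ with $A\subseteq S\subseteq X$. Bases are maximal independent sets. The finitarization $M^{\mathrm{fin}}=(E,\mathcal{L}^{\mathrm{fin}})$ has $\mathcal{L}^{\mathrm{fin}}$ = sets all of whose finite subsets lie in $\mathcal{L}$. The near finitarization is $M^{\mathrm{nfin}}=(E,\mathcal{L}^{\mathrm{nfin}})$ with $\mathcal{L}^{\mathrm{nfin}}=\{F\in\mathcal{L}^{\mathrm{fin}}:\exists S\in\mathcal{L},\ S\subseteq F,\ |F\setminus S|<\infty\}$. A matroid is finitary if a set is independent iff all its finite subsets are independent. $M$ is nearly finitary if $F\setminus B$ is finite whenever a base $F$ of $M^{\mathrm{fin}}$ contains a base $B$ of $M$. *)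

theory Defs
  imports Main
begin

definition base_of :: "'a set set \<Rightarrow> 'a set \<Rightarrow> bool" where
  "base_of L B \<longleftrightarrow> B \<in> L \<and> (\<forall>B'\<in>L. B \<subseteq> B' \<longrightarrow> B' = B)"

definition maximal_in :: "'a set set \<Rightarrow> 'a set \<Rightarrow> 'a set \<Rightarrow> bool" where
  "maximal_in L X S \<longleftrightarrow> S \<in> L \<and> S \<subseteq> X \<and> (\<forall>S'\<in>L. S \<subseteq> S' \<and> S' \<subseteq> X \<longrightarrow> S' = S)"

definition matroid :: "'a set \<Rightarrow> 'a set set \<Rightarrow> bool" where
  "matroid E L \<longleftrightarrow>
     (\<forall>A\<in>L. A \<subseteq> E) \<and>
     {} \<in> L \<and>
     (\<forall>A B. A \<in> L \<and> B \<subseteq> A \<longrightarrow> B \<in> L) \<and>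
     (\<forall>A B. base_of L B \<and> A \<in> L \<and> \<not> base_of L A \<longrightarrow> (\<exists>b\<in>B - A. insert b A \<in> L)) \<and>
     (\<forall>A X. A \<in> L \<and> A \<subseteq> X \<and> X \<subseteq> E \<longrightarrow> (\<exists>S. A \<subseteq> S \<and> maximal_in L X S))"

definition finitarization :: "'a set \<Rightarrow> 'a set set \<Rightarrow> 'a set set" where
  "finitarization E L = {F. F \<subseteq> E \<and> (\<forall>G. G \<subseteq> F \<and> finite G \<longrightarrow> G \<in> L)}"

definition near_finitarization :: "'a set \<Rightarrow> 'a set set \<Rightarrow> 'a set set" where
  "near_finitarization E L =
     {F \<in> finitarization E L. \<exists>S\<in>L. S \<subseteq> F \<and> finite (F - S)}"

definition finitary :: "'a set \<Rightarrow> 'a set set \<Rightarrow> bool" where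
  "finitary E L \<longleftrightarrow> (\<forall>X. X \<subseteq> E \<longrightarrow> (X \<in> L \<longleftrightarrow> (\<forall>G. G \<subseteq> X \<and> finite G \<longrightarrow> G \<in> L)))"

definition nearly_finitary :: "'a set \<Rightarrow> 'a set set \<Rightarrow> bool" where
  "nearly_finitary E L \<longleftrightarrow>
     (\<forall>F B. base_of (finitarization E L) F \<and> base_of L B \<and> B \<subseteq> F \<longrightarrow> finite (F - B))"

end

theory Submission
  imports Defs
begin

lemma matroidD:
  assumes "matroid E L"
  shows "\<forall>A\<in>L. A \<subseteq> E" and "{} \<in> L" and "\<forall>A B. A \<in> L \<and> B \<subseteq> A \<longrightarrow> B \<in> L"
    and "\<forall>A B. base_of L B \<and> A \<in> L \<and> \<not> base_of L A \<longrightarrow> (\<exists>b\<in>B - A. insert b A \<in> L)"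
    and "\<forall>A X. A \<in> L \<and> A \<subseteq> X \<and> X \<subseteq> E \<longrightarrow> (\<exists>S. A \<subseteq> S \<and> maximal_in L X S)"
  using assms unfolding matroid_def by - (elim conjE, assumption)+

lemma mE: "matroid E L \<Longrightarrow> A \<in> L \<Longrightarrow> A \<subseteq> E"
  using matroidD(1) by blast

lemma mdown: "matroid E L \<Longrightarrow> A \<in> L \<Longrightarrow> B \<subseteq> A \<Longrightarrow> B \<in> L"
  using matroidD(3) by blast

lemma maug: "matroid E L \<Longrightarrow> base_of L B \<Longrightarrow> A \<in> L \<Longrightarrow> \<not> base_of L A \<Longrightarrow> \<exists>b\<in>B - A. insert b A \<in> L"
  using matroidD(4) by blast

lemma mIM: "matroid E L \<Longrightarrow> A \<in> L \<Longrightarrow> A \<subseteq> X \<Longrightarrow> X \<subseteq> E \<Longrightarrow> \<exists>S. A \<subseteq> S \<and> maximal_in L X S"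
  using matroidD(5) by blast

lemma mempty: "matroid E L \<Longrightarrow> {} \<in> L"
  using matroidD(2) by blast

lemma base_ext_E:
  assumes M: "matroid E L" and A: "A \<in> L"
  shows "\<exists>B. base_of L B \<and> A \<subseteq> B"
proof -
  obtain S where S: "A \<subseteq> S" "maximal_in L E S" using mIM[OF M A] mE[OF M A] by blast
  have "base_of L S" using S mE[OF M] unfolding maximal_in_def base_of_def by blast
  then show ?thesis using S by blast
qed

lemma base_between:
  assumes M: "matroid E L" and A: "A \<in> L" and B: "base_of L B"
  shows "\<exists>S. base_of L S \<and> A \<subseteq> S \<and> S \<subseteq> A \<union> B"
proof -
  have BL: "B \<in> L" using B unfolding base_of_def by blast
  obtain S where S: "A \<subseteq> S" "maximal_in L (A \<union> B) S"
    using mIM[OF M A, of "A \<union> B"] mE[OF M A] mE[OF M BL] by blast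
  have SL: "S \<in> L" using S unfolding maximal_in_def by blast
  have "base_of L S"
  proof (rule ccontr)
    assume "\<not> base_of L S"
    then obtain b where b: "b \<in> B - S" "insert b S \<in> L" using maug[OF M B SL] by blast
    then show False using S unfolding maximal_in_def by blast
  qed
  then show ?thesis using S unfolding maximal_in_def by blast
qed

section \<open>Exchange\<close>

lemma exch_step:
  assumes M: "matroid E L" and B1: "base_of L B1" and B2: "base_of L B2" and x: "x \<in> B1 - B2"
  shows "\<exists>b\<in>B2 - B1. base_of L (insert b (B1 - {x}))"
proof -
  have B1L: "B1 \<in> L" using B1 unfolding base_of_def by blast
  have AL: "B1 - {x} \<in> L" using mdown[OF M B1L] by blast
  have nb: "\<not> base_of L (B1 - {x})" using B1L x unfolding base_of_def by blast
  obtain b where b: "b \<in> B2 - (B1 - {x})" "insert b (B1 - {x}) \<in> L" using maug[OF M B2 AL nb] by blast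
  have bB1: "b \<notin> B1" using b x by blast
  have "base_of L (insert b (B1 - {x}))"
  proof (rule ccontr)
    assume "\<not> base_of L (insert b (B1 - {x}))"
    then obtain c where c: "c \<in> B1 - insert b (B1 - {x})" "insert c (insert b (B1 - {x})) \<in> L"
      using maug[OF M B1 b(2)] by blast
    have "c = x" using c by blast
    then have "insert c (insert b (B1 - {x})) = insert b B1" using x by blast
    then have "insert b B1 \<in> L" using c by simp
    then show False using B1 bB1 unfolding base_of_def by blast
  qed
  then show ?thesis using b bB1 by blast
qed

lemma exch_card:
  assumes M: "matroid E L"
  shows "\<And>B1. card (B1 - B2) = n \<Longrightarrow> base_of L B1 \<Longrightarrow> base_of L B2 \<Longrightarrow> finite (B1 - B2) \<Longrightarrow>
     finite (B2 - B1) \<and> card (B2 - B1) = n"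
proof (induction n)
  case 0
  then have "B1 \<subseteq> B2" by auto
  then have "B1 = B2" using 0 unfolding base_of_def by blast
  then show ?case by simp
next
  case (Suc n)
  then obtain x where x: "x \<in> B1 - B2" by (metis card.empty empty_iff nat.distinct(1) subsetI subset_antisym)
  obtain b where b: "b \<in> B2 - B1" "base_of L (insert b (B1 - {x}))"
    using exch_step[OF M Suc(3) Suc(4) x] by blast
  let ?B = "insert b (B1 - {x})"
  have e1: "?B - B2 = (B1 - B2) - {x}" using b x by blast
  have e2: "B2 - ?B = (B2 - B1) - {b}" using b x by blast
  have "card (?B - B2) = n" using e1 Suc(2) Suc(5) x by simp
  then have IH: "finite (B2 - ?B) \<and> card (B2 - ?B) = n"
    using Suc.IH[OF _ b(2) Suc(4)] e1 Suc(5) by simp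
  have e3: "B2 - B1 = insert b (B2 - ?B)" using b x by blast
  have "b \<notin> B2 - ?B" by blast
  then show ?case using IH e3 by simp
qed

lemma exch:
  assumes M: "matroid E L" and "base_of L B1" "base_of L B2" "finite (B1 - B2)"
  shows "finite (B2 - B1) \<and> card (B2 - B1) = card (B1 - B2)"
  using exch_card[OF M] assms by blast

lemma fin_aug:
  assumes M: "matroid E L" and I: "I \<in> L" "finite I" and J: "J \<in> L" "finite J"
    and c: "card I < card J"
  shows "\<exists>x\<in>J - I. insert x I \<in> L"
proof (rule ccontr)
  assume na: "\<not> ?thesis"
  obtain BB where BB: "base_of L BB" "J \<subseteq> BB" using base_ext_E[OF M J(1)] by blast
  obtain S where S: "base_of L S" "I \<subseteq> S" "S \<subseteq> I \<union> BB" using base_between[OF M I(1) BB(1)] by blast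
  have SL: "S \<in> L" using S unfolding base_of_def by blast
  have disj: "S \<inter> (J - I) = {}"
  proof (rule ccontr)
    assume "S \<inter> (J - I) \<noteq> {}"
    then obtain x where "x \<in> S" "x \<in> J - I" by blast
    then have "insert x I \<in> L" using mdown[OF M SL] S(2) by blast
    then show False using na \<open>x \<in> J - I\<close> by blast
  qed
  have s1: "S - BB \<subseteq> I - J" using S BB by blast
  have f1: "finite (S - BB)" using s1 I(2) finite_subset by blast
  have ex: "finite (BB - S) \<and> card (BB - S) = card (S - BB)" using exch[OF M S(1) BB(1) f1] .
  have s2: "J - I \<subseteq> BB - S" using disj BB by blast
  have "card (J - I) \<le> card (BB - S)" using s2 ex card_mono by blast
  also have "\<dots> = card (S - BB)" using ex by simp
  also have "\<dots> \<le> card (I - J)" using s1 card_mono I(2) by blast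
  finally have "card (J - I) \<le> card (I - J)" .
  moreover have "card J = card (J \<inter> I) + card (J - I)"
    using J(2) by (metis Diff_Diff_Int card_Diff_subset_Int card_Int_Diff finite_Int)
  moreover have "card I = card (I \<inter> J) + card (I - J)"
    using I(2) by (metis card_Int_Diff)
  ultimately show False using c by (simp add: Int_commute)
qed

section \<open>The finitarization\<close>

lemma P_fin: "A \<in> finitarization E L \<Longrightarrow> G \<subseteq> A \<Longrightarrow> finite G \<Longrightarrow> G \<in> L"
  unfolding finitarization_def by blast

lemma P_E: "A \<in> finitarization E L \<Longrightarrow> A \<subseteq> E"
  unfolding finitarization_def by blast

lemma L_P: assumes M: "matroid E L" and A: "A \<in> L" shows "A \<in> finitarization E L"
  unfolding finitarization_def using mE[OF M A] mdown[OF M A] by blast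

lemma P_down: "A \<in> finitarization E L \<Longrightarrow> B \<subseteq> A \<Longrightarrow> B \<in> finitarization E L"
  unfolding finitarization_def by blast

lemma P_finite_iff: "finite G \<Longrightarrow> G \<subseteq> E \<Longrightarrow> matroid E L \<Longrightarrow> G \<in> finitarization E L \<longleftrightarrow> G \<in> L"
  using L_P P_fin by blast

lemma P_IM:
  assumes A: "A \<in> finitarization E L" and AX: "A \<subseteq> X" and XE: "X \<subseteq> E"
  shows "\<exists>S. A \<subseteq> S \<and> maximal_in (finitarization E L) X S"
proof -
  let ?P = "finitarization E L"
  let ?A = "{S \<in> ?P. A \<subseteq> S \<and> S \<subseteq> X}"
  have ne: "?A \<noteq> {}" using A AX by blast
  have ch: "\<Union>C \<in> ?A" if C: "C \<noteq> {}" "subset.chain ?A C" for C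
  proof -
    have CA: "C \<subseteq> ?A" using C(2) unfolding subset.chain_def by blast
    have "\<Union>C \<in> ?P"
      unfolding finitarization_def
    proof (intro CollectI conjI allI impI)
      show "\<Union>C \<subseteq> E" using CA XE by blast
      fix G assume G: "G \<subseteq> \<Union>C \<and> finite G"
      obtain B where B: "B \<in> C" "G \<subseteq> B" using finite_subset_Union_chain[of G C ?A] G C by blast
      then show "G \<in> L" using CA G P_fin[of B E L G] by blast
    qed
    moreover have "A \<subseteq> \<Union>C" using C(1) CA by blast
    moreover have "\<Union>C \<subseteq> X" using CA by blast
    ultimately show ?thesis by blast
  qed
  obtain M where M: "M \<in> ?A" "\<forall>Y\<in>?A. M \<subseteq> Y \<longrightarrow> Y = M"
    using subset_Zorn_nonempty[OF ne ch] by blast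
  have "maximal_in ?P X M" unfolding maximal_in_def
  proof (intro conjI ballI impI)
    show "M \<in> ?P" "M \<subseteq> X" using M by auto
    fix S' assume "S' \<in> ?P" "M \<subseteq> S' \<and> S' \<subseteq> X"
    then show "S' = M" using M by blast
  qed
  then show ?thesis using M by blast
qed

lemma fin_span:
  assumes M: "matroid E L" and H: "finite H" "H \<in> L" and G: "finite G" "G \<in> L"
    and e: "insert e G \<notin> L" "e \<notin> H" "e \<in> E"
    and sp: "\<forall>g\<in>G. g \<in> H \<or> insert g H \<notin> L"
  shows "insert e H \<notin> L"
proof
  assume He: "insert e H \<in> L"
  let ?Y = "H \<union> G \<union> {e}"
  have YE: "?Y \<subseteq> E" using mE[OF M H(2)] mE[OF M G(2)] e(3) by blast
  obtain J where J: "G \<subseteq> J" "maximal_in L ?Y J" using mIM[OF M G(2), of ?Y] YE by blast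
  have JL: "J \<in> L" and JY: "J \<subseteq> ?Y" using J unfolding maximal_in_def by auto
  have fJ: "finite J" using JY H(1) G(1) finite_subset by blast
  have eJ: "e \<notin> J" using J(1) JL mdown[OF M JL, of "insert e G"] e(1) by blast
  have c1: "card J \<le> card H"
  proof (rule ccontr)
    assume "\<not> card J \<le> card H"
    then obtain x where x: "x \<in> J - H" "insert x H \<in> L" using fin_aug[OF M H(2) H(1) JL fJ] by auto
    then have "x \<in> G" using JY eJ by blast
    then show False using sp x by blast
  qed
  have "card J < card (insert e H)" using c1 e(2) H(1) by simp
  then obtain x where x: "x \<in> insert e H - J" "insert x J \<in> L"
    using fin_aug[OF M JL fJ He] H(1) by auto
  have conj: "J \<subseteq> insert x J \<and> insert x J \<subseteq> ?Y" using x JY by blast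
  have max: "\<forall>S'\<in>L. J \<subseteq> S' \<and> S' \<subseteq> ?Y \<longrightarrow> S' = J"
    using J(2) unfolding maximal_in_def by (elim conjE)
  have "insert x J = J" by (rule mp[OF bspec[OF max x(2)] conj])
  then show False using x by blast
qed

lemma P_aug:
  assumes M: "matroid E L" and F: "base_of (finitarization E L) F"
    and A: "A \<in> finitarization E L" and nA: "\<not> base_of (finitarization E L) A"
  shows "\<exists>f\<in>F - A. insert f A \<in> finitarization E L"
proof (rule ccontr)
  let ?P = "finitarization E L"
  assume na: "\<not> ?thesis"
  have FP: "F \<in> ?P" using F unfolding base_of_def by blast
  obtain A' where A': "A' \<in> ?P" "A \<subseteq> A'" "A' \<noteq> A" using nA A unfolding base_of_def by blast
  then obtain e where e: "e \<in> A'" "e \<notin> A" by blast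
  have eA: "insert e A \<in> ?P" using P_down[OF A'(1)] e A'(2) by blast
  have eE: "e \<in> E" using P_E[OF A'(1)] e by blast
  have eF: "e \<notin> F" using na e eA by blast
  have "insert e F \<notin> ?P" using F eF unfolding base_of_def by blast
  moreover have "insert e F \<subseteq> E" using P_E[OF FP] eE by blast
  ultimately obtain G where G: "G \<subseteq> insert e F" "finite G" "G \<notin> L"
    unfolding finitarization_def by blast
  define G0 where "G0 = G - {e}"
  have G0: "G0 \<subseteq> F" "finite G0" using G unfolding G0_def by auto
  have G0L: "G0 \<in> L" using P_fin[OF FP G0(1) G0(2)] .
  have eG0: "insert e G0 \<notin> L" using G mdown[OF M, of "insert e G0" G] unfolding G0_def by blast
  have "\<forall>f\<in>F - A. \<exists>H. finite H \<and> H \<subseteq> A \<and> insert f H \<notin> L"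
  proof
    fix f assume f: "f \<in> F - A"
    have "insert f A \<notin> ?P" using na f by blast
    moreover have "insert f A \<subseteq> E" using P_E[OF FP] P_E[OF A] f by blast
    ultimately obtain K where K: "K \<subseteq> insert f A" "finite K" "K \<notin> L"
      unfolding finitarization_def by blast
    have "K - {f} \<subseteq> A" using K by blast
    moreover have "insert f (K - {f}) \<notin> L" using K mdown[OF M, of "insert f (K - {f})" K] by blast
    ultimately show "\<exists>H. finite H \<and> H \<subseteq> A \<and> insert f H \<notin> L" using K(2) by blast
  qed
  then obtain h where h: "\<forall>f\<in>F - A. finite (h f) \<and> h f \<subseteq> A \<and> insert f (h f) \<notin> L"
    by metis
  define H where "H = (G0 \<inter> A) \<union> \<Union>(h ` (G0 - A))"
  have Hf: "finite H" unfolding H_def using G0 h by auto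
  have HA: "H \<subseteq> A" unfolding H_def using G0 h by auto
  have HL: "H \<in> L" using P_fin[OF A HA Hf] .
  have eH: "e \<notin> H" using HA e by blast
  have sp: "\<forall>g\<in>G0. g \<in> H \<or> insert g H \<notin> L"
  proof
    fix g assume g: "g \<in> G0"
    show "g \<in> H \<or> insert g H \<notin> L"
    proof (cases "g \<in> A")
      case True then show ?thesis using g unfolding H_def by blast
    next
      case False
      then have gh: "insert g (h g) \<notin> L" "h g \<subseteq> H" using h g G0 unfolding H_def by auto
      then have "insert g (h g) \<subseteq> insert g H" by blast
      then show ?thesis using gh mdown[OF M, of "insert g H" "insert g (h g)"] by blast
    qed
  qed
  have "insert e H \<notin> L" using fin_span[OF M Hf HL G0(2) G0L eG0 eH eE sp] .
  moreover have "insert e H \<in> L"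
    using P_fin[OF eA, of "insert e H"] HA Hf by blast
  ultimately show False by blast
qed

lemma P_matroid:
  assumes M: "matroid E L"
  shows "matroid E (finitarization E L)"
  unfolding matroid_def
proof (intro conjI allI impI ballI)
  show "\<And>A. A \<in> finitarization E L \<Longrightarrow> A \<subseteq> E" using P_E by blast
  show "{} \<in> finitarization E L" using L_P[OF M mempty[OF M]] .
  show "\<And>A B. A \<in> finitarization E L \<and> B \<subseteq> A \<Longrightarrow> B \<in> finitarization E L" using P_down by blast
  show "\<And>A B. base_of (finitarization E L) B \<and> A \<in> finitarization E L \<and> \<not> base_of (finitarization E L) A \<Longrightarrow>
         \<exists>b\<in>B - A. insert b A \<in> finitarization E L" using P_aug[OF M] by blast
  show "\<And>A X. A \<in> finitarization E L \<and> A \<subseteq> X \<and> X \<subseteq> E \<Longrightarrow> \<exists>S. A \<subseteq> S \<and> maximal_in (finitarization E L) X S"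
    using P_IM by blast
qed

section \<open>Bases of the finitarization\<close>

lemma key:
  assumes M: "matroid E L" and T: "maximal_in L F T" and b: "insert b T \<in> L" "b \<notin> F"
    and G0: "G0 \<subseteq> F" "G0 \<in> L"
  shows "insert b G0 \<in> L"
proof -
  have TL: "T \<in> L" and TF: "T \<subseteq> F" using T unfolding maximal_in_def by auto
  obtain B1 where B1: "base_of L B1" "insert b T \<subseteq> B1" using base_ext_E[OF M b(1)] by blast
  have B1L: "B1 \<in> L" using B1 unfolding base_of_def by blast
  obtain S where S: "base_of L S" "G0 \<subseteq> S" "S \<subseteq> G0 \<union> B1" using base_between[OF M G0(2) B1(1)] by blast
  have SL: "S \<in> L" using S unfolding base_of_def by blast
  have IB: "T \<union> (S - F) \<subseteq> B1" using B1 S G0 by blast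
  have IL: "T \<union> (S - F) \<in> L" using mdown[OF M B1L IB] .
  obtain S3 where S3: "base_of L S3" "T \<union> (S - F) \<subseteq> S3" "S3 \<subseteq> T \<union> (S - F) \<union> S"
    using base_between[OF M IL S(1)] by blast
  have S3L: "S3 \<in> L" using S3 unfolding base_of_def by blast
  have "S3 \<inter> F \<in> L" using mdown[OF M S3L] by blast
  moreover have "T \<subseteq> S3 \<inter> F" using S3 TF by blast
  ultimately have "S3 \<inter> F = T" using T unfolding maximal_in_def by blast
  then have "S3 \<subseteq> T \<union> (S - F)" using S3(3) by blast
  then have "S3 \<subseteq> B1" using IB by blast
  then have "S3 = B1" using S3(1) B1L unfolding base_of_def by blast
  then have "b \<in> S" using B1 \<open>S3 \<subseteq> T \<union> (S - F)\<close> TF b(2) by blast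
  then show ?thesis using mdown[OF M SL] S(2) by blast
qed

lemma P_base_contains:
  assumes M: "matroid E L" and F: "base_of (finitarization E L) F"
  shows "\<exists>B. base_of L B \<and> B \<subseteq> F"
proof -
  let ?P = "finitarization E L"
  have FP: "F \<in> ?P" using F unfolding base_of_def by blast
  have FE: "F \<subseteq> E" using P_E[OF FP] .
  obtain T where T: "maximal_in L F T" using mIM[OF M mempty[OF M], of F] FE by blast
  have TL: "T \<in> L" and TF: "T \<subseteq> F" using T unfolding maximal_in_def by auto
  have "base_of L T"
  proof (rule ccontr)
    assume nb: "\<not> base_of L T"
    obtain B0 where B0: "base_of L B0" using base_ext_E[OF M mempty[OF M]] by blast
    obtain b where b: "b \<in> B0 - T" "insert b T \<in> L" using maug[OF M B0 TL nb] by blast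
    have bF: "b \<notin> F" using T b unfolding maximal_in_def by blast
    have bE: "b \<in> E" using b B0 mE[OF M] unfolding base_of_def by blast
    have "insert b F \<notin> ?P" using F bF unfolding base_of_def by blast
    moreover have "insert b F \<subseteq> E" using FE bE by blast
    ultimately obtain G where G: "G \<subseteq> insert b F" "finite G" "G \<notin> L"
      unfolding finitarization_def by blast
    have G0: "G - {b} \<subseteq> F" using G by blast
    have "G - {b} \<in> L" using P_fin[OF FP G0] G by blast
    then have "insert b (G - {b}) \<in> L" using key[OF M T b(2) bF G0] by blast
    then show False using G mdown[OF M, of "insert b (G - {b})" G] by blast
  qed
  then show ?thesis using TF by blast
qed

lemma max_base: "maximal_in K E F \<Longrightarrow> \<forall>A\<in>K. A \<subseteq> E \<Longrightarrow> base_of K F"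
  unfolding maximal_in_def base_of_def by blast

lemma N_sub_P: "near_finitarization E L \<subseteq> finitarization E L"
  unfolding near_finitarization_def by blast

lemma L_N: assumes M: "matroid E L" and A: "A \<in> L" shows "A \<in> near_finitarization E L"
proof -
  have "A \<in> finitarization E L" using L_P[OF M A] .
  moreover have "A \<subseteq> A" "finite (A - A)" by auto
  ultimately show ?thesis unfolding near_finitarization_def using A by blast
qed

lemma N_eq_P:
  assumes M: "matroid E L" and NF: "nearly_finitary E L"
  shows "near_finitarization E L = finitarization E L"
proof
  show "near_finitarization E L \<subseteq> finitarization E L" by (rule N_sub_P)
  show "finitarization E L \<subseteq> near_finitarization E L"
  proof
    fix X assume X: "X \<in> finitarization E L"
    obtain F where F: "X \<subseteq> F" "maximal_in (finitarization E L) E F"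
      using P_IM[OF X P_E[OF X] subset_refl] by blast
    have "\<forall>A\<in>finitarization E L. A \<subseteq> E" using P_E by blast
    then have Fb: "base_of (finitarization E L) F"
      using max_base F(2) by blast
    obtain B where B: "base_of L B" "B \<subseteq> F" using P_base_contains[OF M Fb] by blast
    have "finite (F - B)" using NF Fb B unfolding nearly_finitary_def by blast
    moreover have "X - B \<inter> X \<subseteq> F - B" using F(1) by blast
    ultimately have fin: "finite (X - B \<inter> X)" using finite_subset by blast
    have BL: "B \<in> L" using B(1) unfolding base_of_def by blast
    have BX: "B \<inter> X \<in> L" using mdown[OF M BL] by blast
    have "B \<inter> X \<subseteq> X" by blast
    then have "\<exists>S\<in>L. S \<subseteq> X \<and> finite (X - S)" using BX fin by blast
    then show "X \<in> near_finitarization E L" unfolding near_finitarization_def using X by blast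
  qed
qed

theorem theorem4p1p1:
  fixes E :: "'a set" and L :: "'a set set"
  assumes "matroid E L"
  shows "(matroid E (near_finitarization E L) \<and> finitary E (near_finitarization E L))
           \<longleftrightarrow> nearly_finitary E L"
proof
  note M = assms
  assume h: "matroid E (near_finitarization E L) \<and> finitary E (near_finitarization E L)"
  show "nearly_finitary E L"
    unfolding nearly_finitary_def
  proof (intro allI impI)
    fix F B assume FB: "base_of (finitarization E L) F \<and> base_of L B \<and> B \<subseteq> F"
    have FP: "F \<in> finitarization E L" using FB unfolding base_of_def by blast
    have FE: "F \<subseteq> E" using P_E[OF FP] .
    have "\<forall>G. G \<subseteq> F \<and> finite G \<longrightarrow> G \<in> near_finitarization E L"
      using P_fin[OF FP] L_N[OF M] by blast
    then have "F \<in> near_finitarization E L" using h FE unfolding finitary_def by blast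
    then obtain S where S: "S \<in> L" "S \<subseteq> F" "finite (F - S)"
      unfolding near_finitarization_def by blast
    obtain BB where BB: "base_of L BB" "S \<subseteq> BB" using base_ext_E[OF M S(1)] by blast
    have "finite (B - BB)" using S BB FB finite_subset[of "B - BB" "F - S"] by blast
    then have "finite (BB - B)" using exch[OF M FB[THEN conjunct2, THEN conjunct1] BB(1)] by blast
    moreover have "F - B \<subseteq> (F - S) \<union> (BB - B)" using BB by blast
    ultimately show "finite (F - B)" using S(3) finite_subset by blast
  qed
next
  note M = assms
  assume NF: "nearly_finitary E L"
  have eq: "near_finitarization E L = finitarization E L" using N_eq_P[OF M NF] .
  have "finitary E (finitarization E L)"
    unfolding finitary_def
  proof (intro allI impI, rule iffI)
    fix X assume XE: "X \<subseteq> E"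
    { assume X: "X \<in> finitarization E L"
      show "\<forall>G. G \<subseteq> X \<and> finite G \<longrightarrow> G \<in> finitarization E L" using P_down[OF X] by blast }
    { assume h: "\<forall>G. G \<subseteq> X \<and> finite G \<longrightarrow> G \<in> finitarization E L"
      show "X \<in> finitarization E L" unfolding finitarization_def
        using XE h P_fin by blast }
  qed
  then show "matroid E (near_finitarization E L) \<and> finitary E (near_finitarization E L)"
    using P_matroid[OF M] eq by simp
qed

end
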